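(* Let $A=(a_{ij})$ be a real $n\times n$ matrix with nonnegative entries, $\mathbf 1=(1,\ldots,1)^{\mathrm T}$, $L=\operatorname{diag}(A\mathbf 1)-A$, and let $P=I-\tau L$ with $0<\tau\le\bigl(\max_i\sum_{j\neq i}a_{ij}\bigr)^{-1}$ (so that $P$ is row stochastic). Let $S$ be the orthogonal projection of $\mathbb R^n$ onto $\mathcal R(L)\oplus\operatorname{span}(\mathbf 1)$, and let $\widetilde P=PS$. Then for every initial vector $x(0)\in\mathbb R^n$, the process $x(k)=\widetilde P^{\,k}x(0)$ coincides with the process $x(k)=P^kSx(0)$, i.e., $\widetilde P^{\,k}x(0)=P^kSx(0)$ for all $k=1,2,\ldots$.
   Context: $\mathcal R(L)$ denotes the range of $L$; $I$ is the $n\times n$ identity matrix. The process $x(k)=P^kSx(0)$ is the orthogonal projection method applied to DeGroot's iterative pooling process $y(k)=P^ky(0)$. *)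

theory Defs
  imports "HOL-Analysis.Analysis"
begin

primrec mpow :: "real^'n^'n \<Rightarrow> nat \<Rightarrow> real^'n^'n" where
  "mpow M 0 = mat 1"
| "mpow M (Suc k) = M ** mpow M k"

definition ones :: "real^'n" where "ones = (\<chi> i. 1)"

definition diag_mat :: "real^'n \<Rightarrow> real^'n^'n" where
  "diag_mat v = (\<chi> i j. if i = j then v $ i else 0)"

definition laplacian :: "real^'n^'n \<Rightarrow> real^'n^'n" where
  "laplacian A = diag_mat (A *v ones) - A"

definition mrange :: "real^'n^'m \<Rightarrow> (real^'m) set" where
  "mrange M = range (\<lambda>x. M *v x)"

definition is_orth_proj :: "real^'n^'n \<Rightarrow> (real^'n) set \<Rightarrow> bool" where
  "is_orth_proj S V \<longleftrightarrow> (\<forall>x. S *v x \<in> V \<and> (\<forall>v\<in>V. (x - S *v x) \<bullet> v = 0))"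

end

theory Submission
  imports Defs
begin

theorem theorem4:
  fixes A S :: "real^'n^'n" and \<tau> :: real
  assumes nonneg: "\<forall>i j. A $ i $ j \<ge> 0"
    and tau_pos: "0 < \<tau>"
    and tau_le: "\<tau> * (MAX i. \<Sum>j\<in>UNIV - {i}. A $ i $ j) \<le> 1"
    and S_proj: "is_orth_proj S (mrange (laplacian A) + span {ones})"
  shows "\<forall>x0 :: real^'n. \<forall>k\<ge>1.
           mpow ((mat 1 - \<tau> *\<^sub>R laplacian A) ** S) k *v x0
         = mpow (mat 1 - \<tau> *\<^sub>R laplacian A) k *v (S *v x0)"
proof -
  define L where "L = laplacian A"
  define P where "P = mat 1 - \<tau> *\<^sub>R L"
  define V where "V = mrange L + span {ones}"
  have sR: "subspace (mrange L)"
    unfolding mrange_def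
    using linear_subspace_image[OF matrix_vector_mul_linear[of L] subspace_UNIV] by simp
  have sV: "subspace V"
  proof -
    have "subspace {x + y|x y. x \<in> mrange L \<and> y \<in> span {ones}}"
      by (rule subspace_sums[OF sR subspace_span])
    moreover have "{x + y|x y. x \<in> mrange L \<and> y \<in> span {ones}} = V"
      unfolding V_def set_plus_def by blast
    ultimately show ?thesis by simp
  qed
  have RV: "L *v y \<in> V" for y
  proof -
    have "L *v y + 0 \<in> V" unfolding V_def mrange_def
      by (intro set_plus_intro) (auto simp: span_zero)
    then show ?thesis by simp
  qed
  have SV: "S *v x \<in> V" for x using S_proj unfolding is_orth_proj_def V_def L_def by blast
  have Sid: "S *v v = v" if "v \<in> V" for v
  proof -
    have "v - S *v v \<in> V" using subspace_diff[OF sV that SV] .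
    then have "(v - S *v v) \<bullet> (v - S *v v) = 0"
      using S_proj unfolding is_orth_proj_def V_def L_def by blast
    then show ?thesis by simp
  qed
  have PV: "P *v y \<in> V" if "y \<in> V" for y
  proof -
    have "P *v y = y - \<tau> *\<^sub>R (L *v y)"
      unfolding P_def by (simp add: matrix_vector_mult_diff_rdistrib matrix_vector_mul_lid scaleR_matrix_vector_assoc)
    then show ?thesis using subspace_diff[OF sV that subspace_scale[OF sV RV]] by simp
  qed
  have PkV: "mpow P k *v y \<in> V" if "y \<in> V" for k y
    using that by (induction k) (auto simp: matrix_vector_mul_assoc[symmetric] PV)
  have main: "mpow (P ** S) (Suc k) *v x = mpow P (Suc k) *v (S *v x)" for k x
  proof (induction k)
    case 0
    then show ?case by (simp add: matrix_vector_mul_assoc[symmetric])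
  next
    case (Suc k)
    have "mpow (P ** S) (Suc (Suc k)) *v x = P *v (S *v (mpow (P ** S) (Suc k) *v x))"
      by (simp add: matrix_vector_mul_assoc[symmetric])
    also have "\<dots> = P *v (S *v (mpow P (Suc k) *v (S *v x)))" using Suc by simp
    also have "\<dots> = P *v (mpow P (Suc k) *v (S *v x))" using Sid[OF PkV[OF SV, of "Suc k" x]] by simp
    also have "\<dots> = mpow P (Suc (Suc k)) *v (S *v x)"
      by (simp add: matrix_vector_mul_assoc[symmetric])
    finally show ?case .
  qed
  show ?thesis
  proof (intro allI impI)
    fix x0 :: "real^'n" and k :: nat assume "k \<ge> 1"
    then obtain m where "k = Suc m" by (cases k) auto
    then show "mpow ((mat 1 - \<tau> *\<^sub>R laplacian A) ** S) k *v x0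
         = mpow (mat 1 - \<tau> *\<^sub>R laplacian A) k *v (S *v x0)"
      using main unfolding P_def L_def by simp
  qed
qed

end
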